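(* Let $\mathcal{L}_1,\mathcal{L}_2\in\mathrm{Mat}_d(\mathbb{Z})$ be irreducible and coprime, and let $\Lambda=\mathbb{Z}^d\cap \mathcal{L}_1^{-1}\mathcal{L}_2 \mathbb{Z}^d\cap \mathcal{L}_2^{-1}\mathcal{L}_1 \mathbb{Z}^d$, $\Gamma_1=\Lambda\cap \mathcal{L}_2^{-1}\mathcal{L}_1\Lambda$, $G=\mathbb{Z}^d/\Gamma_1$, and $\phi_1,\phi_2:G\to\mathbb{Z}^d/\mathcal{L}_1\Lambda$ the homomorphisms $\phi_i(x+\Gamma_1)=\mathcal{L}_ix+\mathcal{L}_1\Lambda$. Let $X\subseteq G$ with $0\in X$. Then at least one of the following holds: (1) $X$ does not generate $G$; (2) $|\phi_1(X)+\phi_2(X)|>|X|$; (3) $\Lambda/\Gamma_1\subseteq X$.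
   Context: Irreducible: there are no non-trivial subspaces $U,V$ of $\mathbb{Q}^d$ of the same dimension with $\mathcal{L}_1U\subseteq V$ and $\mathcal{L}_2U\subseteq V$. Coprime: there are no $\mathcal{P},\mathcal{Q}\in \mathrm{GL}_d(\mathbb{Q})$ with $0<|\det(\mathcal{P})\det(\mathcal{Q})|<1$ such that $\mathcal{P}\mathcal{L}_1\mathcal{Q},\mathcal{P}\mathcal{L}_2\mathcal{Q}\in\mathrm{Mat}_d(\mathbb{Z})$. The maps $\phi_1,\phi_2$ are well defined and $\phi_1+\phi_2$ is an isomorphism. *)

theory Defs
  imports "HOL-Analysis.Analysis"
begin

definition ratmat :: "int^'n^'n \<Rightarrow> rat^'n^'n" where
  "ratmat L = (\<chi> i j. of_int (L $ i $ j))"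

definition irreducible_pair :: "int^'n^'n \<Rightarrow> int^'n^'n \<Rightarrow> bool" where
  "irreducible_pair L1 L2 \<longleftrightarrow>
     \<not> (\<exists>U V :: (rat^'n) set.
          vec.subspace U \<and> vec.subspace V \<and> vec.dim U = vec.dim V \<and>
          U \<noteq> {0} \<and> U \<noteq> UNIV \<and> V \<noteq> {0} \<and> V \<noteq> UNIV \<and>
          (\<lambda>u. ratmat L1 *v u) ` U \<subseteq> V \<and> (\<lambda>u. ratmat L2 *v u) ` U \<subseteq> V)"

definition integral_mat :: "rat^'n^'n \<Rightarrow> bool" where
  "integral_mat M \<longleftrightarrow> (\<forall>i j. M $ i $ j \<in> \<int>)"

definition coprime_pair :: "int^'n^'n \<Rightarrow> int^'n^'n \<Rightarrow> bool" where
  "coprime_pair L1 L2 \<longleftrightarrow>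
     \<not> (\<exists>P Q :: rat^'n^'n. invertible P \<and> invertible Q \<and>
          0 < \<bar>det P * det Q\<bar> \<and> \<bar>det P * det Q\<bar> < 1 \<and>
          integral_mat (P ** ratmat L1 ** Q) \<and> integral_mat (P ** ratmat L2 ** Q))"

text \<open>Lambda = Z^d \<inter> L1^{-1} L2 Z^d \<inter> L2^{-1} L1 Z^d (inverse images taken in Q^d).\<close>
definition Lam :: "int^'n^'n \<Rightarrow> int^'n^'n \<Rightarrow> (int^'n) set" where
  "Lam L1 L2 = {x. (\<exists>y. L1 *v x = L2 *v y) \<and> (\<exists>y. L2 *v x = L1 *v y)}"

definition Gam1 :: "int^'n^'n \<Rightarrow> int^'n^'n \<Rightarrow> (int^'n) set" where
  "Gam1 L1 L2 = {x \<in> Lam L1 L2. \<exists>y \<in> Lam L1 L2. L2 *v x = L1 *v y}"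

definition coset :: "'a::ab_group_add set \<Rightarrow> 'a \<Rightarrow> 'a set" where
  "coset H x = (\<lambda>h. x + h) ` H"

definition quot :: "'a::ab_group_add set \<Rightarrow> 'a set \<Rightarrow> 'a set set" where
  "quot A H = coset H ` A"

inductive_set qgen :: "'a::ab_group_add set \<Rightarrow> 'a set set \<Rightarrow> 'a set set"
  for H X where
  zero: "coset H 0 \<in> qgen H X"
| add: "coset H x \<in> X \<Longrightarrow> coset H y \<in> qgen H X \<Longrightarrow> coset H (y + x) \<in> qgen H X"
| sub: "coset H x \<in> X \<Longrightarrow> coset H y \<in> qgen H X \<Longrightarrow> coset H (y - x) \<in> qgen H X"

definition phi_img :: "int^'n^'n \<Rightarrow> int^'n^'n \<Rightarrow> int^'n^'n \<Rightarrow> (int^'n) set set \<Rightarrow> (int^'n) set set" where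
  "phi_img L1 L2 L X =
     {coset ((\<lambda>y. L1 *v y) ` Lam L1 L2) (L *v x) | x. coset (Gam1 L1 L2) x \<in> X}"

definition qsumset :: "'a::ab_group_add set \<Rightarrow> 'a set set \<Rightarrow> 'a set set \<Rightarrow> 'a set set" where
  "qsumset K A B = {coset K (u + v) | u v. coset K u \<in> A \<and> coset K v \<in> B}"

end

theory Submission
  imports Defs
begin

definition sg :: "'a::ab_group_add set \<Rightarrow> bool" where
  "sg H \<longleftrightarrow> 0 \<in> H \<and> (\<forall>a\<in>H. \<forall>b\<in>H. a - b \<in> H)"

lemma sg_0: "sg H \<Longrightarrow> 0 \<in> H" by (simp add: sg_def)
lemma sg_diff: "sg H \<Longrightarrow> a \<in> H \<Longrightarrow> b \<in> H \<Longrightarrow> a - b \<in> H" by (simp add: sg_def)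
lemma sg_neg: "sg H \<Longrightarrow> a \<in> H \<Longrightarrow> - a \<in> H"
  using sg_diff[of H 0 a] sg_0[of H] by simp
lemma sg_add: "sg H \<Longrightarrow> a \<in> H \<Longrightarrow> b \<in> H \<Longrightarrow> a + b \<in> H"
  using sg_diff[of H a "-b"] sg_neg[of H b] by simp

lemma coset_eq: assumes "sg H" shows "coset H x = coset H y \<longleftrightarrow> x - y \<in> H"
proof
  assume e: "coset H x = coset H y"
  have "x \<in> coset H x" using sg_0[OF assms] unfolding coset_def by force
  then obtain h where "h \<in> H" "x = y + h" using e unfolding coset_def by auto
  then show "x - y \<in> H" by simp
next
  assume d: "x - y \<in> H"
  show "coset H x = coset H y"
  proof
    show "coset H x \<subseteq> coset H y"
    proof
      fix z assume "z \<in> coset H x"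
      then obtain h where h: "h \<in> H" "z = x + h" unfolding coset_def by auto
      have "(x - y) + h \<in> H" using sg_add[OF assms d h(1)] .
      moreover have "z = y + ((x - y) + h)" using h by simp
      ultimately show "z \<in> coset H y" unfolding coset_def by blast
    qed
  next
    show "coset H y \<subseteq> coset H x"
    proof
      fix z assume "z \<in> coset H y"
      then obtain h where h: "h \<in> H" "z = y + h" unfolding coset_def by auto
      have "(y - x) + h \<in> H" using sg_add[OF assms sg_neg[OF assms d] h(1)] by simp
      moreover have "z = x + ((y - x) + h)" using h by simp
      ultimately show "z \<in> coset H x" unfolding coset_def by blast
    qed
  qed
qed

lemmas mvd = matrix_vector_right_distrib matrix_vector_mult_diff_distrib

lemma Lam_sg: "sg (Lam L1 L2)"
  unfolding sg_def Lam_def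
proof (intro conjI ballI)
  show "0 \<in> {x. (\<exists>y. L1 *v x = L2 *v y) \<and> (\<exists>y. L2 *v x = L1 *v y)}"
    by (auto intro!: exI[of _ 0])
next
  fix a b assume a: "a \<in> {x. (\<exists>y. L1 *v x = L2 *v y) \<and> (\<exists>y. L2 *v x = L1 *v y)}"
    and b: "b \<in> {x. (\<exists>y. L1 *v x = L2 *v y) \<and> (\<exists>y. L2 *v x = L1 *v y)}"
  from a obtain y1 y2 where "L1 *v a = L2 *v y1" "L2 *v a = L1 *v y2" by auto
  moreover from b obtain z1 z2 where "L1 *v b = L2 *v z1" "L2 *v b = L1 *v z2" by auto
  ultimately have "L1 *v (a - b) = L2 *v (y1 - z1)" "L2 *v (a - b) = L1 *v (y2 - z2)"
    by (simp_all add: mvd)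
  then show "a - b \<in> {x. (\<exists>y. L1 *v x = L2 *v y) \<and> (\<exists>y. L2 *v x = L1 *v y)}" by blast
qed

lemma Gam_sub: "Gam1 L1 L2 \<subseteq> Lam L1 L2" unfolding Gam1_def by auto

lemma Gam_sg: "sg (Gam1 L1 L2)"
  unfolding sg_def
proof (intro conjI ballI)
  show "0 \<in> Gam1 L1 L2" unfolding Gam1_def using sg_0[OF Lam_sg] by (auto intro!: bexI[of _ 0])
next
  fix a b assume a: "a \<in> Gam1 L1 L2" and b: "b \<in> Gam1 L1 L2"
  from a obtain y where y: "y \<in> Lam L1 L2" "L2 *v a = L1 *v y" "a \<in> Lam L1 L2" unfolding Gam1_def by auto
  from b obtain z where z: "z \<in> Lam L1 L2" "L2 *v b = L1 *v z" "b \<in> Lam L1 L2" unfolding Gam1_def by auto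
  have "y - z \<in> Lam L1 L2" "a - b \<in> Lam L1 L2" using sg_diff[OF Lam_sg] y z by auto
  moreover have "L2 *v (a - b) = L1 *v (y - z)" using y z by (simp add: mvd)
  ultimately show "a - b \<in> Gam1 L1 L2" unfolding Gam1_def by auto
qed

lemma M_sg: "sg ((\<lambda>y. L1 *v y) ` Lam L1 L2)"
  unfolding sg_def
proof (intro conjI ballI)
  show "0 \<in> (\<lambda>y. L1 *v y) ` Lam L1 L2" using sg_0[OF Lam_sg]
    by (metis image_eqI matrix_vector_mult_0_right)
next
  fix a b assume "a \<in> (\<lambda>y. L1 *v y) ` Lam L1 L2" "b \<in> (\<lambda>y. L1 *v y) ` Lam L1 L2"
  then obtain y z where "y \<in> Lam L1 L2" "z \<in> Lam L1 L2" "a = L1 *v y" "b = L1 *v z" by auto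
  then show "a - b \<in> (\<lambda>y. L1 *v y) ` Lam L1 L2"
    using sg_diff[OF Lam_sg] by (metis image_eqI mvd(2))
qed


locale LL =
  fixes L1 L2 :: "int^'n^'n"
begin

abbreviation "Lm \<equiv> Lam L1 L2"
abbreviation "K \<equiv> Gam1 L1 L2"
abbreviation "M \<equiv> (\<lambda>y. L1 *v y) ` Lam L1 L2"

definition AA :: "int^'n \<Rightarrow> int^'n \<Rightarrow> bool" where
  "AA x z \<longleftrightarrow> L1 *v x - (L1 *v z + L2 *v z) \<in> M"

lemma Lm_sg: "sg Lm" by (rule Lam_sg)
lemma K_sg: "sg K" by (rule Gam_sg)
lemma M_sg': "sg M" by (rule M_sg)

lemma M_add: "a \<in> M \<Longrightarrow> b \<in> M \<Longrightarrow> a + b \<in> M" using sg_add[OF M_sg'] .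
lemma M_diff: "a \<in> M \<Longrightarrow> b \<in> M \<Longrightarrow> a - b \<in> M" using sg_diff[OF M_sg'] .
lemma M_neg: "a \<in> M \<Longrightarrow> - a \<in> M" using sg_neg[OF M_sg'] .
lemma M_0: "0 \<in> M" using sg_0[OF M_sg'] .
lemma L1_M: "x \<in> Lm \<Longrightarrow> L1 *v x \<in> M" by auto

lemma Lm_L1: "x \<in> Lm \<Longrightarrow> \<exists>y. L1 *v x = L2 *v y" unfolding Lam_def by auto
lemma Lm_L2: "x \<in> Lm \<Longrightarrow> \<exists>y. L2 *v x = L1 *v y" unfolding Lam_def by auto
lemma Lm_I: "(\<exists>y. L1 *v x = L2 *v y) \<Longrightarrow> (\<exists>y. L2 *v x = L1 *v y) \<Longrightarrow> x \<in> Lm"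
  unfolding Lam_def by auto

lemma K_Lm: "k \<in> K \<Longrightarrow> k \<in> Lm" using Gam_sub by blast

lemma K_M: "k \<in> K \<Longrightarrow> L1 *v k + L2 *v k \<in> M"
proof -
  assume k: "k \<in> K"
  then obtain y where y: "y \<in> Lm" "L2 *v k = L1 *v y" "k \<in> Lm" unfolding Gam1_def by auto
  have "k + y \<in> Lm" using sg_add[OF Lm_sg] y by auto
  moreover have "L1 *v k + L2 *v k = L1 *v (k + y)" using y by (simp add: mvd)
  ultimately show ?thesis by auto
qed

lemma psi_inj: assumes "L1 *v w + L2 *v w \<in> M" shows "w \<in> K"
proof -
  obtain l where l: "l \<in> Lm" "L1 *v w + L2 *v w = L1 *v l" using assms by auto
  obtain y1 where y1: "L1 *v l = L2 *v y1" using Lm_L1[OF l(1)] by auto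
  obtain y2 where y2: "L2 *v l = L1 *v y2" using Lm_L2[OF l(1)] by auto
  have "L1 *v w = L2 *v (y1 - w)" using l(2) y1 by (simp add: mvd algebra_simps)
  moreover have "L2 *v w = L1 *v (l - w)" using l(2) by (simp add: mvd algebra_simps)
  ultimately have w: "w \<in> Lm" by (intro Lm_I) blast+
  have "L1 *v (l - w) = L2 *v w" using l(2) by (simp add: mvd algebra_simps)
  moreover have "L2 *v (l - w) = L1 *v (y2 - (l - w))"
    using l(2) y2 by (simp add: mvd algebra_simps)
  ultimately have "l - w \<in> Lm" by (intro Lm_I) blast+
  moreover have "L2 *v w = L1 *v (l - w)" using l(2) by (simp add: mvd algebra_simps)
  ultimately show "w \<in> K" unfolding Gam1_def using w by blast
qed

lemma L3: assumes "AA x u" "AA u w" shows "L2 *v w \<in> M"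
proof -
  obtain a where a: "a \<in> Lm" "L1 *v x - (L1 *v u + L2 *v u) = L1 *v a" using assms(1) unfolding AA_def by auto
  obtain b where b: "b \<in> Lm" "L1 *v u - (L1 *v w + L2 *v w) = L1 *v b" using assms(2) unfolding AA_def by auto
  obtain b' where b': "L2 *v b = L1 *v b'" using Lm_L2[OF b(1)] by auto
  define m where "m = u - w - b"
  have e1: "L2 *v w = L1 *v m" using b(2) unfolding m_def by (simp add: mvd algebra_simps)
  have e2: "L2 *v u = L1 *v (x - u - a)" using a(2) by (simp add: mvd algebra_simps)
  have "L2 *v m = L2 *v u - L2 *v w - L2 *v b" by (simp add: m_def mvd)
  also have "\<dots> = L1 *v (x - u - a) - L1 *v m - L1 *v b'" using e1 e2 b' by simp
  also have "\<dots> = L1 *v (x - u - a - m - b')" by (simp add: mvd)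
  finally have "L2 *v m = L1 *v (x - u - a - m - b')" .
  then have "m \<in> Lm" using e1 by (intro Lm_I) (metis, blast)
  then show ?thesis using e1 by auto
qed

lemma AA_add: "AA a b \<Longrightarrow> AA c d \<Longrightarrow> AA (a + c) (b + d)"
  unfolding AA_def by (drule (1) M_add) (simp add: mvd algebra_simps)
lemma AA_diff: "AA a b \<Longrightarrow> AA c d \<Longrightarrow> AA (a - c) (b - d)"
  unfolding AA_def by (drule (1) M_diff) (simp add: mvd algebra_simps)
lemma AA_shift1: "AA a b \<Longrightarrow> k \<in> K \<Longrightarrow> AA (a + k) b"
  unfolding AA_def using L1_M[OF K_Lm] by (drule_tac M_add) (auto simp: mvd algebra_simps)
lemma AA_shift2: "AA a b \<Longrightarrow> k \<in> K \<Longrightarrow> AA a (b + k)"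
proof -
  assume "AA a b" "k \<in> K"
  then have "L1 *v a - (L1 *v b + L2 *v b) - (L1 *v k + L2 *v k) \<in> M"
    unfolding AA_def using K_M M_diff by blast
  then show ?thesis unfolding AA_def by (simp add: mvd algebra_simps)
qed
lemma AA_uniq: "AA a s \<Longrightarrow> AA a t \<Longrightarrow> s - t \<in> K"
proof -
  assume "AA a s" "AA a t"
  then have "(L1 *v a - (L1 *v t + L2 *v t)) - (L1 *v a - (L1 *v s + L2 *v s)) \<in> M"
    unfolding AA_def using M_diff by blast
  then have "L1 *v (s - t) + L2 *v (s - t) \<in> M" by (simp add: mvd algebra_simps)
  then show ?thesis by (rule psi_inj)
qed
lemma AA_0: "AA 0 0" unfolding AA_def using M_0 by simp
lemma AA_qq: "AA x u \<Longrightarrow> AA u w \<Longrightarrow> AA w w"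
  unfolding AA_def using L3[of x u w] M_neg by (simp add: AA_def)

end


locale LLX = LL L1 L2 for L1 L2 :: "int^'n^'n" +
  fixes Xs :: "(int^'n) set" and nn :: nat
  assumes inj1: "\<And>x y. L1 *v x = L1 *v y \<Longrightarrow> x = y"
    and clos: "\<And>x y. x \<in> Xs \<Longrightarrow> y \<in> Xs \<Longrightarrow> \<exists>z\<in>Xs. L1 *v x + L2 *v y - (L1 *v z + L2 *v z) \<in> M"
    and Kcl: "\<And>x k. x \<in> Xs \<Longrightarrow> k \<in> K \<Longrightarrow> x + k \<in> Xs"
    and X0: "0 \<in> Xs"
    and nn: "nn > 0" "\<And>x. int nn *s x \<in> K"
begin

lemma M_Lm: "L1 *v s \<in> M \<Longrightarrow> s \<in> Lm"
  using inj1 by auto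

definition II :: "int^'n \<Rightarrow> bool" where
  "II y \<longleftrightarrow> (\<exists>p q s. AA y p \<and> AA p q \<and> s \<in> Xs \<and> AA (y - q) s)"

lemma sLam: assumes "AA y p" "AA p q" "AA (y - q) s" shows "s \<in> Lm"
proof -
  have qq: "AA q q" using AA_qq[OF assms(1,2)] .
  have "AA (y - q) (p - q)" using AA_diff[OF assms(1) qq] .
  then have k: "s - (p - q) \<in> K" using AA_uniq assms(3) by blast
  have "AA (p - q) (q - q)" using AA_diff[OF assms(2) qq] .
  then have "L1 *v (p - q) \<in> M" unfolding AA_def by simp
  then have "p - q \<in> Lm" by (rule M_Lm)
  then have "(p - q) + (s - (p - q)) \<in> Lm" using sg_add[OF Lm_sg] K_Lm[OF k] by blast
  then show ?thesis by simp
qed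

lemma II_shift: "II y \<Longrightarrow> k \<in> K \<Longrightarrow> II (y + k)"
proof -
  assume "II y" "k \<in> K"
  then obtain p q s where "AA y p" "AA p q" "s \<in> Xs" "AA (y - q) s" unfolding II_def by blast
  moreover have "AA (y + k) p" using AA_shift1 \<open>AA y p\<close> \<open>k \<in> K\<close> .
  moreover have "AA (y + k - q) s" using AA_shift1[OF \<open>AA (y - q) s\<close> \<open>k \<in> K\<close>] by (simp add: algebra_simps)
  ultimately show "II (y + k)" unfolding II_def by blast
qed

lemma II_add: assumes "II y" "x \<in> Xs" shows "II (y + x)"
proof -
  obtain p q s where pqs: "AA y p" "AA p q" "s \<in> Xs" "AA (y - q) s" using assms(1) unfolding II_def by blast
  have sL: "s \<in> Lm" using sLam pqs by blast
  obtain u where u: "u \<in> Xs" "L1 *v x + L2 *v 0 - (L1 *v u + L2 *v u) \<in> M" using clos[OF assms(2) X0] by blast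
  have Axu: "AA x u" using u(2) unfolding AA_def by simp
  obtain w where w: "w \<in> Xs" "L1 *v u + L2 *v 0 - (L1 *v w + L2 *v w) \<in> M" using clos[OF u(1) X0] by blast
  have Auw: "AA u w" using w(2) unfolding AA_def by simp
  obtain v where v: "v \<in> Xs" "L1 *v 0 + L2 *v x - (L1 *v v + L2 *v v) \<in> M" using clos[OF X0 assms(2)] by blast
  have E3: "L2 *v x - (L1 *v v + L2 *v v) \<in> M" using v(2) by simp
  obtain z where z: "z \<in> Xs" "L1 *v v + L2 *v x - (L1 *v z + L2 *v z) \<in> M" using clos[OF v(1) assms(2)] by blast
  have "- (L1 *v x - (L1 *v u + L2 *v u)) - (L2 *v x - (L1 *v v + L2 *v v)) \<in> M"
    using M_diff[OF M_neg[OF Axu[unfolded AA_def]] E3] .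
  then have "L1 *v (u + v - x) + L2 *v (u + v - x) \<in> M" by (simp add: mvd algebra_simps)
  then have "u + v - x \<in> K" by (rule psi_inj)
  then have "L1 *v (u + v - x) \<in> M" using L1_M[OF K_Lm] by blast
  then have "L1 *v (v + u - x) \<in> M" by (simp add: add.commute)
  then have "- (L1 *v v + L2 *v x - (L1 *v z + L2 *v z)) - (L1 *v u - (L1 *v w + L2 *v w)) + L1 *v (v + u - x) \<in> M"
    using M_add[OF M_diff[OF M_neg[OF z(2)] Auw[unfolded AA_def]]] by blast
  then have "L1 *v (z - (x - w)) + L2 *v (z - (x - w)) \<in> M" by (simp add: mvd algebra_simps)
  then have kz: "z - (x - w) \<in> K" by (rule psi_inj)
  have x'X: "x - w \<in> Xs" using Kcl[OF z(1) sg_neg[OF K_sg kz]] by simp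
  obtain s' where s': "s' \<in> Xs" "L1 *v (x - w) + L2 *v s - (L1 *v s' + L2 *v s') \<in> M"
    using clos[OF x'X pqs(3)] by blast
  have "(L1 *v (y - q) - (L1 *v s + L2 *v s)) + (L1 *v (x - w) + L2 *v s - (L1 *v s' + L2 *v s')) + L1 *v s \<in> M"
    using M_add[OF M_add[OF pqs(4)[unfolded AA_def] s'(2)] L1_M[OF sL]] .
  then have "AA ((y + x) - (q + w)) s'" unfolding AA_def by (simp add: mvd algebra_simps)
  moreover have "AA (y + x) (p + u)" using AA_add[OF pqs(1) Axu] .
  moreover have "AA (p + u) (q + w)" using AA_add[OF pqs(2) Auw] .
  ultimately show ?thesis unfolding II_def using s'(1) by blast
qed

lemma II_addn: "II y \<Longrightarrow> x \<in> Xs \<Longrightarrow> II (y + int n *s x)"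
proof (induction n)
  case 0 then show ?case by simp
next
  case (Suc n)
  then have "II ((y + int n *s x) + x)" using II_add by blast
  moreover have "(y + int n *s x) + x = y + int (Suc n) *s x"
    by (simp add: vec_eq_iff algebra_simps)
  ultimately show ?case by simp
qed

lemma II_sub: assumes "II y" "x \<in> Xs" shows "II (y - x)"
proof -
  have "II (y + int (nn - 1) *s x)" using II_addn assms by blast
  then have "II ((y + int (nn - 1) *s x) + (- (int nn *s x)))"
    using II_shift sg_neg[OF K_sg nn(2)] by blast
  moreover have "(y + int (nn - 1) *s x) + (- (int nn *s x)) = y - x"
    using nn(1) by (simp add: vec_eq_iff algebra_simps of_nat_diff)
  ultimately show ?thesis by metis
qed


lemma II_zero: "II 0"
  unfolding II_def using AA_0 X0 by (intro exI[of _ 0]) auto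

lemma qgen_II:
  assumes Xc: "\<And>x. coset K x \<in> X \<longleftrightarrow> x \<in> Xs"
  shows "c \<in> qgen K X \<Longrightarrow> c = coset K y \<Longrightarrow> II y"
proof (induction arbitrary: y rule: qgen.induct)
  case zero
  then have "0 - y \<in> K" using coset_eq[OF K_sg] by blast
  then have "y \<in> K" using sg_neg[OF K_sg] by force
  then show ?case using II_shift[OF II_zero] by force
next
  case (add x y0)
  have "II y0" using add.IH by blast
  then have "II (y0 + x)" using II_add add.hyps(1) Xc by blast
  moreover have "y - (y0 + x) \<in> K" using add.prems coset_eq[OF K_sg] sg_neg[OF K_sg] by force
  ultimately have "II ((y0 + x) + (y - (y0 + x)))" using II_shift by blast
  then show ?case by simp
next
  case (sub x y0)
  have "II y0" using sub.IH by blast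
  then have "II (y0 - x)" using II_sub sub.hyps(1) Xc by blast
  moreover have "y - (y0 - x) \<in> K" using sub.prems coset_eq[OF K_sg] sg_neg[OF K_sg] by force
  ultimately have "II ((y0 - x) + (y - (y0 - x)))" using II_shift by blast
  then show ?case by simp
qed

lemma core:
  assumes Xc: "\<And>x. coset K x \<in> X \<longleftrightarrow> x \<in> Xs"
    and gen: "qgen K X = quot UNIV K"
    and l: "l \<in> Lm"
  shows "l \<in> Xs"
proof -
  obtain g where g: "L2 *v l = L1 *v g" using Lm_L2[OF l] by auto
  have "coset K g \<in> qgen K X" using gen unfolding quot_def by auto
  then have "II g" using qgen_II[OF Xc] by blast
  then obtain p q s where pqs: "AA g p" "AA p q" "s \<in> Xs" "AA (g - q) s" unfolding II_def by blast
  have Agl: "AA g l" unfolding AA_def using M_neg[OF L1_M[OF l]] g by simp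
  have Al0: "AA l 0" unfolding AA_def using L1_M[OF l] by simp
  have "l - p \<in> K" using AA_uniq[OF Agl pqs(1)] .
  then have "AA (p + (l - p)) q" using AA_shift1 pqs(2) by blast
  then have "AA l q" by simp
  then have "q - 0 \<in> K" using AA_uniq Al0 by blast
  then have "q \<in> K" by simp
  then have "AA ((g - q) + q) s" using AA_shift1 pqs(4) by blast
  then have "AA g s" by simp
  then have "s - l \<in> K" using AA_uniq Agl by blast
  then have "s + (- (s - l)) \<in> Xs" using Kcl pqs(3) sg_neg[OF K_sg] by blast
  then show ?thesis by simp
qed

end


definition ivec :: "int^'n \<Rightarrow> rat^'n" where "ivec x = (\<chi> i. of_int (x $ i))"

lemma ivec_mult: "ratmat L *v ivec x = ivec (L *v x)"
  by (simp add: vec_eq_iff ivec_def ratmat_def matrix_vector_mult_def)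

lemma ivec_inj: "ivec x = ivec y \<Longrightarrow> x = y"
  by (simp add: vec_eq_iff ivec_def)

lemma ivec_scale: "ivec (c *s x) = of_int c *s ivec x"
  by (simp add: vec_eq_iff ivec_def)

lemma denom_int: "\<exists>a. of_int (snd (quotient_of q)) * q = of_int a \<and> snd (quotient_of q) > 0"
proof -
  obtain n d where nd: "quotient_of q = (n, d)" by (cases "quotient_of q") auto
  have "d > 0" using quotient_of_denom_pos[OF nd] .
  moreover have "q = of_int n / of_int d" using quotient_of_div[OF nd] .
  ultimately show ?thesis using nd by (intro exI[of _ n]) simp
qed

lemma common_denom:
  fixes N :: "rat^'n^'n"
  shows "\<exists>c::int. c > 0 \<and> (\<forall>i j. \<exists>a. of_int c * N $ i $ j = of_int a)"
proof -
  define d where "d = (\<lambda>p::'n\<times>'n. snd (quotient_of (N $ fst p $ snd p)))"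
  define c where "c = (\<Prod>p\<in>UNIV. d p)"
  have dpos: "\<And>p. d p > 0" unfolding d_def using denom_int by blast
  have "c > 0" unfolding c_def using dpos by (simp add: prod_pos)
  moreover have "\<exists>a. of_int c * N $ i $ j = of_int a" for i j
  proof -
    obtain a where a: "of_int (d (i, j)) * N $ i $ j = of_int a" unfolding d_def using denom_int by fastforce
    have "c = d (i, j) * (\<Prod>p\<in>UNIV - {(i,j)}. d p)" unfolding c_def
      by (simp add: prod.remove)
    then have "of_int c * N $ i $ j = of_int (\<Prod>p\<in>UNIV - {(i,j)}. d p) * (of_int (d (i, j)) * N $ i $ j)"
      by (simp add: algebra_simps)
    also have "\<dots> = of_int ((\<Prod>p\<in>UNIV - {(i,j)}. d p) * a)" using a by simp
    finally show ?thesis by blast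
  qed
  ultimately show ?thesis by blast
qed

lemma inv_int:
  fixes L :: "int^'n^'n"
  assumes "det (ratmat L) \<noteq> 0"
  shows "(\<forall>x y. L *v x = L *v y \<longrightarrow> x = y) \<and> (\<exists>c::int. c > 0 \<and> (\<forall>z. \<exists>y. L *v y = c *s z))"
proof -
  obtain N where N: "ratmat L ** N = mat 1" "N ** ratmat L = mat 1"
    using assms invertible_det_nz unfolding invertible_def by blast
  have inj: "L *v x = L *v y \<longrightarrow> x = y" for x y
  proof
    assume "L *v x = L *v y"
    then have "N *v (ratmat L *v ivec x) = N *v (ratmat L *v ivec y)" by (simp add: ivec_mult)
    then have "ivec x = ivec y" by (simp add: matrix_vector_mul_assoc N)
    then show "x = y" by (rule ivec_inj)
  qed
  obtain c where c: "c > 0" "\<And>i j. \<exists>a. of_int c * N $ i $ j = of_int a" using common_denom[of N] by blast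
  define Ni :: "int^'n^'n" where "Ni = (\<chi> i j. \<lfloor>of_int c * N $ i $ j\<rfloor>)"
  have Ni: "ratmat Ni = (\<chi> i j. of_int c * N $ i $ j)"
  proof -
    have "of_int \<lfloor>of_int c * N $ i $ j\<rfloor> = of_int c * N $ i $ j" for i j
      using c(2)[of i j] by auto
    then show ?thesis by (simp add: ratmat_def Ni_def vec_eq_iff)
  qed
  have sc: "ratmat Ni *v w = of_int c *s (N *v w)" for w
    by (simp add: Ni vec_eq_iff matrix_vector_mult_def sum_distrib_left mult.assoc)
  have "L *v (Ni *v z) = c *s z" for z
  proof -
    have "ivec (L *v (Ni *v z)) = ratmat L *v (ratmat Ni *v ivec z)" by (simp add: ivec_mult)
    also have "\<dots> = of_int c *s ((ratmat L ** N) *v ivec z)"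
      by (simp add: sc vector_scalar_commute matrix_vector_mul_assoc)
    also have "\<dots> = ivec (c *s z)" by (simp add: N ivec_scale)
    finally show ?thesis by (rule ivec_inj)
  qed
  then show ?thesis using inj c(1) by blast
qed

lemma sing_ker:
  fixes A :: "rat^'n^'n"
  assumes "det A = 0" shows "\<exists>v. v \<noteq> 0 \<and> A *v v = 0"
proof -
  have "\<not> inj ((*v) A)"
    using det_nz_iff_inj_gen[OF matrix_vector_mul_linear_gen[of A]] assms
    by (simp add: matrix_of_matrix_vector_mul)
  then obtain x y where "x \<noteq> y" "A *v x = A *v y" unfolding inj_def by blast
  then show ?thesis by (intro exI[of _ "x - y"]) (simp add: matrix_vector_mult_diff_distrib)
qed


lemma span1_facts:
  fixes v :: "rat^'n"
  assumes "v \<noteq> 0" "CARD('n) \<ge> 2"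
  shows "vec.subspace (vec.span {v}) \<and> vec.dim (vec.span {v}) = 1 \<and>
         vec.span {v} \<noteq> {0} \<and> vec.span {v} \<noteq> UNIV"
proof -
  have d: "vec.dim (vec.span {v}) = 1" using assms(1) by (simp add: vec.dim_span vec.dim_singleton)
  moreover have "vec.span {v} \<noteq> {0}" using assms(1) vec.span_base[of v "{v}"] by auto
  moreover have "vec.span {v} \<noteq> UNIV"
  proof
    assume "vec.span {v} = UNIV"
    then have "vec.dim (UNIV :: (rat^'n) set) = 1" using d by simp
    then show False using assms(2) by (simp add: vec.dim_UNIV card_cart_basis)
  qed
  ultimately show ?thesis by (simp add: vec.subspace_span)
qed

lemma sing_red:
  fixes A B :: "rat^'n^'n"
  assumes v: "v \<noteq> 0" "A *v v = 0" and d: "CARD('n) \<ge> 2"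
  shows "\<exists>U V :: (rat^'n) set.
          vec.subspace U \<and> vec.subspace V \<and> vec.dim U = vec.dim V \<and>
          U \<noteq> {0} \<and> U \<noteq> UNIV \<and> V \<noteq> {0} \<and> V \<noteq> UNIV \<and>
          (\<lambda>u. A *v u) ` U \<subseteq> V \<and> (\<lambda>u. B *v u) ` U \<subseteq> V"
proof -
  define w where "w = (if B *v v = 0 then v else B *v v)"
  have w0: "w \<noteq> 0" using v unfolding w_def by auto
  have fU: "vec.subspace (vec.span {v}) \<and> vec.dim (vec.span {v}) = 1 \<and>
         vec.span {v} \<noteq> {0} \<and> vec.span {v} \<noteq> UNIV" using span1_facts[OF v(1) d] .
  have fV: "vec.subspace (vec.span {w}) \<and> vec.dim (vec.span {w}) = 1 \<and>
         vec.span {w} \<noteq> {0} \<and> vec.span {w} \<noteq> UNIV" using span1_facts[OF w0 d] .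
  have iA: "(\<lambda>u. A *v u) ` vec.span {v} \<subseteq> vec.span {w}"
  proof
    fix z assume "z \<in> (\<lambda>u. A *v u) ` vec.span {v}"
    then obtain u where u: "u \<in> vec.span {v}" "z = A *v u" by blast
    then obtain k where "u = k *s v" by (auto simp: vec.span_singleton)
    then have "z = 0" using u(2) v(2) by (simp add: vector_scalar_commute)
    then show "z \<in> vec.span {w}" using vec.span_zero by simp
  qed
  have iB: "(\<lambda>u. B *v u) ` vec.span {v} \<subseteq> vec.span {w}"
  proof
    fix z assume "z \<in> (\<lambda>u. B *v u) ` vec.span {v}"
    then obtain u where u: "u \<in> vec.span {v}" "z = B *v u" by blast
    then obtain k where "u = k *s v" by (auto simp: vec.span_singleton)
    then have z: "z = k *s (B *v v)" using u(2) by (simp add: vector_scalar_commute)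
    show "z \<in> vec.span {w}"
    proof (cases "B *v v = 0")
      case True then show ?thesis using z vec.span_zero by simp
    next
      case False then show ?thesis using z unfolding w_def by (auto simp: vec.span_singleton)
    qed
  qed
  show ?thesis
    apply (rule exI[of _ "vec.span {v}"])
    apply (rule exI[of _ "vec.span {w}"])
    using fU fV iA iB by simp
qed

lemma card1_zero:
  fixes L :: "int^'n^'n"
  assumes c: "CARD('n) = 1" and v: "v \<noteq> 0" "ratmat L *v v = 0"
  shows "L *v x = 0"
proof -
  obtain a :: 'n where U: "UNIV = {a}" using card_1_singletonE[OF c] by blast
  have all: "\<And>i::'n. i = a" using U by auto
  have "v $ a \<noteq> 0" using v(1) all by (metis vec_eq_iff zero_index)
  moreover have "(ratmat L *v v) $ a = of_int (L $ a $ a) * v $ a"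
    by (simp add: matrix_vector_mult_def ratmat_def U)
  ultimately have "L $ a $ a = 0" using v(2) by simp
  have "(L *v x) $ a = L $ a $ a * x $ a" by (simp add: matrix_vector_mult_def U)
  then have "(L *v x) $ i = 0" for i using all[of i] \<open>L $ a $ a = 0\<close> by simp
  then show ?thesis by (simp add: vec_eq_iff)
qed

lemma finite_box: "finite {x::int^'n. \<forall>i. x $ i \<in> {0..<c}}"
proof -
  let ?S = "{x::int^'n. \<forall>i. x $ i \<in> {0..<c}}"
  have "vec_nth ` ?S \<subseteq> PiE UNIV (\<lambda>_. {0..<c})" by (auto simp: PiE_UNIV_domain)
  moreover have "finite (PiE (UNIV::'n set) (\<lambda>_. {0..<c}))" by (intro finite_PiE) auto
  ultimately have "finite (vec_nth ` ?S)" by (rule finite_subset)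
  moreover have "inj_on vec_nth ?S" by (simp add: inj_on_def vec_nth_inject)
  ultimately show ?thesis by (rule finite_imageD)
qed

lemma finite_cosets:
  fixes H :: "(int^'n) set"
  assumes "sg H" "c > 0" "\<And>z. c *s z \<in> H"
  shows "finite (range (coset H))"
proof -
  have "range (coset H) \<subseteq> coset H ` {x::int^'n. \<forall>i. x $ i \<in> {0..<c}}"
  proof
    fix C assume "C \<in> range (coset H)"
    then obtain x where C: "C = coset H x" by auto
    define x' where "x' = (\<chi> i. x $ i mod c)"
    have "x - x' = c *s (\<chi> i. x $ i div c)"
      unfolding x'_def by (simp add: vec_eq_iff minus_mod_eq_mult_div)
    then have "x - x' \<in> H" using assms(3) by simp
    then have "coset H x = coset H x'" using coset_eq[OF assms(1)] by blast
    moreover have "x' \<in> {x::int^'n. \<forall>i. x $ i \<in> {0..<c}}" unfolding x'_def using assms(2) by auto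
    ultimately show "C \<in> coset H ` {x::int^'n. \<forall>i. x $ i \<in> {0..<c}}" unfolding C by (rule image_eqI)
  qed
  then show ?thesis by (rule finite_subset) (rule finite_imageI[OF finite_box])
qed

lemma card_img_eq:
  assumes "\<And>x y. x \<in> S \<Longrightarrow> y \<in> S \<Longrightarrow> f x = f y \<longleftrightarrow> g x = g y"
  shows "card (f ` S) = card (g ` S)"
proof -
  have "bij_betw (\<lambda>c. g (inv_into S f c)) (f ` S) (g ` S)"
  proof (rule bij_betw_imageI)
    show "inj_on (\<lambda>c. g (inv_into S f c)) (f ` S)"
    proof (rule inj_onI)
      fix a b assume a: "a \<in> f ` S" and b: "b \<in> f ` S" and e: "g (inv_into S f a) = g (inv_into S f b)"
      have "inv_into S f a \<in> S" "inv_into S f b \<in> S" using a b by (auto intro: inv_into_into)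
      then have "f (inv_into S f a) = f (inv_into S f b)" using assms e by blast
      then show "a = b" using a b by (simp add: f_inv_into_f)
    qed
    show "(\<lambda>c. g (inv_into S f c)) ` f ` S = g ` S"
    proof
      show "(\<lambda>c. g (inv_into S f c)) ` f ` S \<subseteq> g ` S" by (auto intro: inv_into_into)
      show "g ` S \<subseteq> (\<lambda>c. g (inv_into S f c)) ` f ` S"
      proof
        fix z assume "z \<in> g ` S"
        then obtain x where x: "x \<in> S" "z = g x" by auto
        have "inv_into S f (f x) \<in> S" using x by (auto intro: inv_into_into)
        moreover have "f (inv_into S f (f x)) = f x" using x by (simp add: f_inv_into_f)
        ultimately have "g (inv_into S f (f x)) = g x" using assms x by blast
        then show "z \<in> (\<lambda>c. g (inv_into S f c)) ` f ` S" using x by force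
      qed
    qed
  qed
  then show ?thesis by (rule bij_betw_same_card)
qed

lemma Lam_sub_Gam:
  assumes "(\<forall>x. L1 *v x = 0) \<or> (\<forall>x. L2 *v x = 0)"
  shows "Lam L1 L2 \<subseteq> Gam1 L1 L2"
proof
  fix x assume x: "x \<in> Lam L1 L2"
  have "0 \<in> Lam L1 L2" using sg_0[OF Lam_sg] .
  moreover have "L2 *v x = L1 *v 0"
    using assms x unfolding Lam_def by auto
  ultimately show "x \<in> Gam1 L1 L2" unfolding Gam1_def using x by blast
qed

lemma concl3:
  assumes "Lam L1 L2 \<subseteq> Gam1 L1 L2" "coset (Gam1 L1 L2) 0 \<in> X"
  shows "quot (Lam L1 L2) (Gam1 L1 L2) \<subseteq> X"
proof
  fix C assume "C \<in> quot (Lam L1 L2) (Gam1 L1 L2)"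
  then obtain l where l: "l \<in> Lam L1 L2" "C = coset (Gam1 L1 L2) l" unfolding quot_def by auto
  have "l - 0 \<in> Gam1 L1 L2" using l(1) assms(1) by auto
  then have "C = coset (Gam1 L1 L2) 0" using l(2) coset_eq[OF Gam_sg] by blast
  then show "C \<in> X" using assms(2) by simp
qed

lemma scale_lemmas:
  fixes L :: "int^'n^'n"
  shows "L *v ((a::int) *s z) = a *s (L *v z)" "a *s (b *s z) = (a * b) *s z"
   apply (simp add: vec_eq_iff matrix_vector_mult_def sum_distrib_left algebra_simps)
  by (simp add: vector_smult_assoc)

theorem lemma4p4:
  fixes L1 L2 :: "int^'n^'n" and X :: "(int^'n) set set"
  assumes irr: "irreducible_pair L1 L2"
    and cop: "coprime_pair L1 L2"
    and XG: "X \<subseteq> quot UNIV (Gam1 L1 L2)"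
    and X0: "coset (Gam1 L1 L2) 0 \<in> X"
  shows "qgen (Gam1 L1 L2) X \<noteq> quot UNIV (Gam1 L1 L2)
      \<or> card (qsumset ((\<lambda>y. L1 *v y) ` Lam L1 L2)
               (phi_img L1 L2 L1 X) (phi_img L1 L2 L2 X)) > card X
      \<or> quot (Lam L1 L2) (Gam1 L1 L2) \<subseteq> X"
proof -
  interpret LL L1 L2 .
  have card1: "\<not> CARD('n) \<ge> 2 \<Longrightarrow> CARD('n) = 1"
  proof -
    have "0 < CARD('n)" by simp
    then show "\<not> CARD('n) \<ge> 2 \<Longrightarrow> CARD('n) = 1" by linarith
  qed
  consider (ns) "det (ratmat L1) \<noteq> 0" "det (ratmat L2) \<noteq> 0"
    | (s1) "det (ratmat L1) = 0" | (s2) "det (ratmat L2) = 0" by blast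
  then show ?thesis
  proof cases
    case s1
    obtain v where v: "v \<noteq> 0" "ratmat L1 *v v = 0" using sing_ker[OF s1] by blast
    show ?thesis
    proof (cases "CARD('n) \<ge> 2")
      case True
      from sing_red[OF v True, of "ratmat L2"] irr have False
        unfolding irreducible_pair_def by blast
      then show ?thesis ..
    next
      case False
      then have "\<forall>x. L1 *v x = 0" using card1_zero[OF card1 v] by blast
      then have "Lm \<subseteq> K" using Lam_sub_Gam by blast
      then show ?thesis using concl3 X0 by blast
    qed
  next
    case s2
    obtain v where v: "v \<noteq> 0" "ratmat L2 *v v = 0" using sing_ker[OF s2] by blast
    show ?thesis
    proof (cases "CARD('n) \<ge> 2")
      case True
      from sing_red[OF v True, of "ratmat L1"] irr have False
        unfolding irreducible_pair_def by blast
      then show ?thesis ..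
    next
      case False
      then have "\<forall>x. L2 *v x = 0" using card1_zero[OF card1 v] by blast
      then have "Lm \<subseteq> K" using Lam_sub_Gam by blast
      then show ?thesis using concl3 X0 by blast
    qed
  next
    case ns
    obtain c1 where inj1: "\<And>x y. L1 *v x = L1 *v y \<Longrightarrow> x = y" and c1: "c1 > 0" "\<And>z. \<exists>y. L1 *v y = c1 *s z"
      using inv_int[OF ns(1)] by blast
    obtain c2 where c2: "c2 > 0" "\<And>z. \<exists>y. L2 *v y = c2 *s z"
      using inv_int[OF ns(2)] by blast
    define n0 where "n0 = c1 * c2"
    have n0L: "n0 *s z \<in> Lm" for z
    proof (rule Lm_I)
      obtain y where y: "L2 *v y = c2 *s (c1 *s (L1 *v z))" using c2(2) by blast
      have "L1 *v (n0 *s z) = c2 *s (c1 *s (L1 *v z))"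
        by (simp add: scale_lemmas n0_def mult.commute)
      then show "\<exists>y. L1 *v (n0 *s z) = L2 *v y" using y by metis
      obtain y' where y': "L1 *v y' = c1 *s (c2 *s (L2 *v z))" using c1(2) by blast
      have "L2 *v (n0 *s z) = c1 *s (c2 *s (L2 *v z))"
        by (simp add: scale_lemmas n0_def)
      then show "\<exists>y. L2 *v (n0 *s z) = L1 *v y" using y' by metis
    qed
    define m where "m = c1 * n0"
    have m0: "m > 0" using c1 c2 unfolding m_def n0_def by simp
    have mK: "m *s z \<in> K" for z
    proof -
      have x: "m *s z \<in> Lm" using n0L[of "c1 *s z"] by (simp add: scale_lemmas m_def mult.commute)
      obtain y' where y': "L1 *v y' = c1 *s (L2 *v z)" using c1(2) by blast
      have "L2 *v (m *s z) = L1 *v (n0 *s y')"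
        using y' by (simp add: scale_lemmas m_def mult.commute)
      then show ?thesis unfolding Gam1_def using x n0L[of y'] by blast
    qed
    have cM: "(c1 * m) *s z \<in> M" for z
    proof -
      obtain y where y: "L1 *v y = c1 *s z" using c1(2) by blast
      have "(c1 * m) *s z = L1 *v (m *s y)" using y by (simp add: scale_lemmas mult.commute)
      moreover have "m *s y \<in> Lm" using K_Lm[OF mK] .
      ultimately show ?thesis by blast
    qed
    define Xs where "Xs = {x. coset K x \<in> X}"
    have Xc: "\<And>x. coset K x \<in> X \<longleftrightarrow> x \<in> Xs" unfolding Xs_def by simp
    have XXs: "X = coset K ` Xs"
      using XG unfolding Xs_def quot_def by auto
    have finX: "finite X"
      using finite_cosets[OF K_sg m0 mK] XG unfolding quot_def by (rule finite_subset[rotated])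
    define S where "S = qsumset M (phi_img L1 L2 L1 X) (phi_img L1 L2 L2 X)"
    define P where "P = (\<lambda>x. coset M (L1 *v x + L2 *v x)) ` Xs"
    have finS: "finite S"
    proof -
      have "S \<subseteq> range (coset M)" unfolding S_def qsumset_def by auto
      moreover have "finite (range (coset M))"
        using finite_cosets[OF M_sg' _ cM] c1 m0 by simp
      ultimately show ?thesis by (rule finite_subset)
    qed
    have PS: "P \<subseteq> S"
    proof
      fix C assume "C \<in> P"
      then obtain x where x: "x \<in> Xs" "C = coset M (L1 *v x + L2 *v x)" unfolding P_def by auto
      have "coset M (L1 *v x) \<in> phi_img L1 L2 L1 X" "coset M (L2 *v x) \<in> phi_img L1 L2 L2 X"
        unfolding phi_img_def using x(1) Xc by blast+
      then show "C \<in> S" unfolding S_def qsumset_def using x(2) by blast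
    qed
    have cardP: "card P = card X"
    proof -
      have "card ((\<lambda>x. coset M (L1 *v x + L2 *v x)) ` Xs) = card (coset K ` Xs)"
      proof (rule card_img_eq)
        fix x y
        have "coset M (L1 *v x + L2 *v x) = coset M (L1 *v y + L2 *v y) \<longleftrightarrow>
              (L1 *v x + L2 *v x) - (L1 *v y + L2 *v y) \<in> M" using coset_eq[OF M_sg'] .
        also have "\<dots> \<longleftrightarrow> L1 *v (x - y) + L2 *v (x - y) \<in> M" by (simp add: mvd algebra_simps)
        also have "\<dots> \<longleftrightarrow> x - y \<in> K" using psi_inj K_M by blast
        also have "\<dots> \<longleftrightarrow> coset K x = coset K y" using coset_eq[OF K_sg] by blast
        finally show "coset M (L1 *v x + L2 *v x) = coset M (L1 *v y + L2 *v y) \<longleftrightarrow> coset K x = coset K y" .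
      qed
      then show ?thesis unfolding P_def XXs .
    qed
    show ?thesis
    proof (rule ccontr)
      assume nc: "\<not> ?thesis"
      then have gen: "qgen K X = quot UNIV K" and not3: "\<not> quot Lm K \<subseteq> X"
        and le: "card S \<le> card X" unfolding S_def by auto
      have PeqS: "P = S" using card_seteq[OF finS PS] le cardP by simp
      have clos: "\<exists>z\<in>Xs. L1 *v x + L2 *v y - (L1 *v z + L2 *v z) \<in> M" if "x \<in> Xs" "y \<in> Xs" for x y
      proof -
        have "coset M (L1 *v x) \<in> phi_img L1 L2 L1 X" "coset M (L2 *v y) \<in> phi_img L1 L2 L2 X"
          unfolding phi_img_def using that Xc by blast+
        then have "coset M (L1 *v x + L2 *v y) \<in> S" unfolding S_def qsumset_def by blast
        then obtain z where z: "z \<in> Xs" "coset M (L1 *v x + L2 *v y) = coset M (L1 *v z + L2 *v z)"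
          using PeqS unfolding P_def by auto
        then show ?thesis using coset_eq[OF M_sg'] by blast
      qed
      have Kcl: "x + k \<in> Xs" if "x \<in> Xs" "k \<in> K" for x k
      proof -
        have "(x + k) - x \<in> K" using that by simp
        then have "coset K (x + k) = coset K x" using coset_eq[OF K_sg] by blast
        then show ?thesis using that(1) Xc by metis
      qed
      have X0': "0 \<in> Xs" using X0 Xc by blast
      have nn: "nat m > 0" "\<And>x. int (nat m) *s x \<in> K" using m0 mK by auto
      interpret LLX L1 L2 Xs "nat m"
        by unfold_locales (use inj1 clos Kcl X0' nn in blast)+
      have "Lm \<subseteq> Xs" using core[OF Xc gen] by blast
      then have "quot Lm K \<subseteq> X" unfolding quot_def using Xc by auto
      then show False using not3 by blast
    qed
  qed
qed

end
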